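(* Let $\gamma=(\alpha,\beta)\in\mathbb N_0^{2n}$ with $\alpha\ge\beta$, let $\sigma\in\{+,-\}$ with $\alpha>\beta$ if $\sigma=-$, and assume $g_\sigma^\gamma\in\hat A_n^\perp$. Let $y_\pm^{(\ell)}$ be the Commutator Chain of Type II generated by $g_+^\gamma,g_-^\gamma$. Then for all $\ell\ge0$, $$\deg(y_\sigma^{(\ell)})=3^\ell(|\gamma|-2)+2\ge 3^\ell+2 .$$
   Context: Fix $n\ge 1$. The Weyl algebra $A_n$ is the unital associative $\mathbb{C}$-algebra generated by $a_1,\dots,a_n,a_1^\dagger,\dots,a_n^\dagger$ subject to $[a_i,a_j^\dagger]=\delta_{ij}$ and $[a_i,a_j]=[a_i^\dagger,a_j^\dagger]=0$. For $\gamma=(\alpha,\beta)\in\mathbb N_0^{2n}$ set $a^{\gamma}=(a_1^\dagger)^{\alpha_1}\cdots(a_n^\dagger)^{\alpha_n}a_1^{\beta_1}\cdots a_n^{\beta_n}$; these form a $\mathbb C$-basis of $A_n$; $|\gamma|=\sum_j\alpha_j+\sum_j\beta_j$. For $0\neq g\in A_n$, $\deg(g)$ is the largest $|\gamma|$ such that $a^\gamma$ has nonzero coefficient in the expansion of $g$; $\deg(0)=-\infty$. The adjoint $\dagger$ is the conjugate-linear anti-automorphism with $(a_j)^\dagger=a_j^\dagger$, $(a_j^\dagger)^\dagger=a_j$, $1^\dagger=1$. The skew-hermitian Weyl algebra is $\hat A_n=\{g\in A_n: g^\dagger=-g\}$. Let $g_+^\gamma=i((a^\gamma)^\dagger+a^\gamma)$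 and $g_-^\gamma=(a^\gamma)^\dagger-a^\gamma$. With lexicographic order on $\mathbb N_0^n$, a basis element is $g_+^{(\alpha,\beta)}$ with $\alpha\ge\beta$ or $g_-^{(\alpha,\beta)}$ with $\alpha>\beta$; these form an $\mathbb R$-basis of $\hat A_n$. Subspaces of $\hat A_n$ (real spans of basis elements $g_\sigma^{\gamma}$, $\gamma=(\alpha,\beta)$): $\hat A_n^0$ is spanned by $2i$ and $2ia_k^\dagger a_k$ ($1\le k\le n$), i.e. the basis elements with $\alpha=\beta$, $|\gamma|\in\{0,2\}$; $\hat A_n^1$ by basis elements with $|\gamma|=1$; $\hat A_n^2$ by basis elements with $|\gamma|=2$ and $\alpha\ne\beta$; $\hat A_n^=$ by basis elements with $\alpha=\beta$ and $|\gamma|\ge 4$; $\hat A_n^{\mathrm{om}}$ by basis elements with $|\gamma|\ge3$ for which there is a unique index $k$ with $\alpha_k+\beta_k=1$ and $\alpha_j=\beta_j$ for all $j\neq k$; $\hat A_n^\perp$ by all remaining basis elements. Commutator Chain of Type II generated by $g_+^\gamma,g_-^\gamma$: $y_\sigma^{(0)}=g_\sigma^\gamma$ for $\sigma\in\{+,-\}$, and $y_\sigma^{(\ell+1)}=[y_\sigma^{(\ell)},[y_+^{(\ell)},y_-^{(\ell)}]]$ for $\ell\ge0$. *)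

theory Defs
  imports Complex_Main "HOL-Library.Poly_Mapping" "HOL-Library.Extended_Real"
begin

(* Multi-indices: finitely supported nat \<Rightarrow>\<^sub>0 nat; mode j of the paper (1..n) is index j-1 here. *)
type_synonym midx = "nat \<Rightarrow>\<^sub>0 nat"

(* Normal-ordered monomial index gamma = (alpha, beta) for  a^gamma = (a^dag)^alpha a^beta *)
type_synonym widx = "midx \<times> midx"

(* Elements of the Weyl algebra: finite complex linear combinations of the basis a^gamma *)
type_synonym weyl = "widx \<Rightarrow>\<^sub>0 complex"

definition midx_abs :: "midx \<Rightarrow> nat" where
  "midx_abs a = (\<Sum>j\<in>Poly_Mapping.keys a. Poly_Mapping.lookup a j)"

definition widx_abs :: "widx \<Rightarrow> nat" where
  "widx_abs g = midx_abs (fst g) + midx_abs (snd g)"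

definition in_modes :: "nat \<Rightarrow> widx \<Rightarrow> bool" where
  "in_modes n g \<longleftrightarrow> Poly_Mapping.keys (fst g) \<subseteq> {..<n} \<and> Poly_Mapping.keys (snd g) \<subseteq> {..<n}"

definition wmon :: "widx \<Rightarrow> weyl" where
  "wmon g = Poly_Mapping.single g 1"

(* Normal ordering: a^b (a^dag)^c = sum_k prod_j k_j! C(b_j,k_j) C(c_j,k_j) (a^dag)^(c-k) a^(b-k),
   hence  a^(al,be) a^(al',be') = sum_{k \<le> min(be,al')} coeff(k) a^(al+al'-k, be+be'-k). *)
definition nord_coeff :: "midx \<Rightarrow> midx \<Rightarrow> midx \<Rightarrow> complex" where
  "nord_coeff b c k = (\<Prod>j\<in>Poly_Mapping.keys k. of_nat (fact (Poly_Mapping.lookup k j) * (Poly_Mapping.lookup b j choose Poly_Mapping.lookup k j)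
                                      * (Poly_Mapping.lookup c j choose Poly_Mapping.lookup k j)))"

definition mon_mult :: "widx \<Rightarrow> widx \<Rightarrow> weyl" where
  "mon_mult g h =
     (\<Sum>k\<in>{k::midx. \<forall>j. Poly_Mapping.lookup k j \<le> min (Poly_Mapping.lookup (snd g) j) (Poly_Mapping.lookup (fst h) j)}.
        Poly_Mapping.single (fst g + fst h - k, snd g + snd h - k)
          (nord_coeff (snd g) (fst h) k))"

definition wscale :: "complex \<Rightarrow> weyl \<Rightarrow> weyl" where
  "wscale c f = Poly_Mapping.map (\<lambda>z. c * z) f"

definition wmult :: "weyl \<Rightarrow> weyl \<Rightarrow> weyl" where
  "wmult f g = (\<Sum>p\<in>Poly_Mapping.keys f. \<Sum>q\<in>Poly_Mapping.keys g. wscale (Poly_Mapping.lookup f p * Poly_Mapping.lookup g q) (mon_mult p q))"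

definition wcomm :: "weyl \<Rightarrow> weyl \<Rightarrow> weyl" where
  "wcomm f g = wmult f g - wmult g f"

(* Adjoint: ((a^dag)^al a^be)^dag = (a^dag)^be a^al, conjugate-linear *)
definition wadj :: "weyl \<Rightarrow> weyl" where
  "wadj f = (\<Sum>p\<in>Poly_Mapping.keys f. Poly_Mapping.single (snd p, fst p) (cnj (Poly_Mapping.lookup f p)))"

definition wdeg :: "weyl \<Rightarrow> ereal" where
  "wdeg f = (if f = 0 then -\<infinity> else ereal (real (Max (widx_abs ` Poly_Mapping.keys f))))"

definition lex_less :: "midx \<Rightarrow> midx \<Rightarrow> bool" where
  "lex_less a b \<longleftrightarrow> (\<exists>i. (\<forall>j<i. Poly_Mapping.lookup a j = Poly_Mapping.lookup b j) \<and> Poly_Mapping.lookup a i < Poly_Mapping.lookup b i)"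

datatype sgn = SPlus | SMinus

definition gbasis :: "sgn \<Rightarrow> widx \<Rightarrow> weyl" where
  "gbasis s g = (case s of
      SPlus \<Rightarrow> wscale \<i> (wadj (wmon g) + wmon g)
    | SMinus \<Rightarrow> wadj (wmon g) - wmon g)"

(* Indices of the R-basis of the skew-hermitian Weyl algebra hat A_n *)
definition basis_idx :: "nat \<Rightarrow> sgn \<Rightarrow> widx \<Rightarrow> bool" where
  "basis_idx n s g \<longleftrightarrow> in_modes n g \<and>
     (case s of SPlus \<Rightarrow> \<not> lex_less (fst g) (snd g)
              | SMinus \<Rightarrow> lex_less (snd g) (fst g))"

definition class0 :: "widx \<Rightarrow> bool" where
  "class0 g \<longleftrightarrow> fst g = snd g \<and> widx_abs g \<in> {0, 2}"
definition class1 :: "widx \<Rightarrow> bool" where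
  "class1 g \<longleftrightarrow> widx_abs g = 1"
definition class2 :: "widx \<Rightarrow> bool" where
  "class2 g \<longleftrightarrow> widx_abs g = 2 \<and> fst g \<noteq> snd g"
definition class_eq :: "widx \<Rightarrow> bool" where
  "class_eq g \<longleftrightarrow> fst g = snd g \<and> widx_abs g \<ge> 4"
definition class_om :: "nat \<Rightarrow> widx \<Rightarrow> bool" where
  "class_om n g \<longleftrightarrow> widx_abs g \<ge> 3 \<and>
     (\<exists>!k. k < n \<and> Poly_Mapping.lookup (fst g) k + Poly_Mapping.lookup (snd g) k = 1 \<and>
            (\<forall>j<n. j \<noteq> k \<longrightarrow> Poly_Mapping.lookup (fst g) j = Poly_Mapping.lookup (snd g) j))"
definition class_perp :: "nat \<Rightarrow> widx \<Rightarrow> bool" where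
  "class_perp n g \<longleftrightarrow> \<not> class0 g \<and> \<not> class1 g \<and> \<not> class2 g \<and> \<not> class_eq g \<and> \<not> class_om n g"

definition rspan :: "weyl set \<Rightarrow> weyl set" where
  "rspan B = {f. \<exists>S c. finite S \<and> S \<subseteq> B \<and> f = (\<Sum>b\<in>S. wscale (complex_of_real (c b)) b)}"

definition hatA_perp :: "nat \<Rightarrow> weyl set" where
  "hatA_perp n = rspan {gbasis s g | s g. basis_idx n s g \<and> class_perp n g}"

fun chain2 :: "weyl \<Rightarrow> weyl \<Rightarrow> nat \<Rightarrow> weyl \<times> weyl" where
  "chain2 yp ym 0 = (yp, ym)"
| "chain2 yp ym (Suc l) =
     (let (p, m) = chain2 yp ym l; c = wcomm p m in (wcomm p c, wcomm m c))"

definition chain_sel :: "sgn \<Rightarrow> weyl \<times> weyl \<Rightarrow> weyl" where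
  "chain_sel s pm = (case s of SPlus \<Rightarrow> fst pm | SMinus \<Rightarrow> snd pm)"

end

theory Submission
  imports Defs "HOL-Computational_Algebra.Polynomial"
begin

abbreviation lk where "lk \<equiv> Poly_Mapping.lookup"
abbreviation ks where "ks \<equiv> Poly_Mapping.keys"
abbreviation sg where "sg \<equiv> Poly_Mapping.single"

definition ej :: "nat \<Rightarrow> midx" where "ej j = Poly_Mapping.single j 1"

lemma lookup_wscale[simp]: "lk (wscale c f) x = c * lk f x"
  unfolding wscale_def by (simp add: map.rep_eq when_def)

lemma midx_abs_superset: "finite S \<Longrightarrow> ks a \<subseteq> S \<Longrightarrow> midx_abs a = (\<Sum>j\<in>S. lk a j)"
  unfolding midx_abs_def by (rule sum.mono_neutral_left) (auto simp: in_keys_iff)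

lemma keys_add_sub: "ks (a + b) \<subseteq> ks a \<union> ks b"
  by (auto simp: in_keys_iff lookup_add)

lemma midx_abs_add: "midx_abs (a + b) = midx_abs a + midx_abs b"
proof -
  let ?S = "ks a \<union> ks b"
  have f: "finite ?S" by simp
  have "midx_abs (a+b) = (\<Sum>j\<in>?S. lk (a+b) j)"
    by (rule midx_abs_superset[OF f]) (rule keys_add_sub)
  also have "\<dots> = (\<Sum>j\<in>?S. lk a j) + (\<Sum>j\<in>?S. lk b j)" by (simp add: lookup_add sum.distrib)
  also have "\<dots> = midx_abs a + midx_abs b"
    using midx_abs_superset[OF f, of a] midx_abs_superset[OF f, of b] by auto
  finally show ?thesis .
qed

lemma midx_abs_diff:
  assumes "\<forall>j. lk k j \<le> lk a j"
  shows "midx_abs (a - k) = midx_abs a - midx_abs k" "midx_abs k \<le> midx_abs a"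
proof -
  have "(a - k) + k = a" using assms by (intro poly_mapping_eqI) (simp add: lookup_add lookup_minus)
  then have "midx_abs (a - k) + midx_abs k = midx_abs a" by (metis midx_abs_add)
  then show "midx_abs (a - k) = midx_abs a - midx_abs k" "midx_abs k \<le> midx_abs a" by auto
qed

lemma midx_abs_eq0: "midx_abs k = 0 \<longleftrightarrow> k = 0"
proof
  assume "midx_abs k = 0"
  then have "\<forall>j\<in>ks k. lk k j = 0" unfolding midx_abs_def by simp
  then show "k = 0" by (intro poly_mapping_eqI) (auto simp: in_keys_iff)
qed (simp add: midx_abs_def)

lemma midx_abs_ej[simp]: "midx_abs (ej j) = 1"
  by (simp add: midx_abs_def ej_def)

lemma lookup_ej: "lk (ej j) i = (if i = j then 1 else 0)"
  by (simp add: ej_def lookup_single when_def)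

lemma ej_neq0[simp]: "ej j \<noteq> 0"
  by (metis midx_abs_ej midx_abs_eq0 zero_neq_one)

lemma ej_inj: "ej i = ej j \<longleftrightarrow> i = j"
  by (metis lookup_ej one_neq_zero)

lemma midx_abs_1:
  assumes "midx_abs k = 1"
  shows "\<exists>j. k = ej j"
proof -
  have "k \<noteq> 0" proof assume "k = 0" with assms show False by (simp add: midx_abs_def) qed
  then obtain j where j: "j \<in> ks k" by (metis ex_in_conv in_keys_iff poly_mapping_eqI lookup_zero)
  have f: "finite (ks k)" by simp
  have "midx_abs k = lk k j + (\<Sum>i\<in>ks k - {j}. lk k i)"
    unfolding midx_abs_def using sum.remove[OF f j] by simp
  moreover have "lk k j \<ge> 1" using j by (simp add: in_keys_iff)
  ultimately have 1: "lk k j = 1" and 2: "(\<Sum>i\<in>ks k - {j}. lk k i) = 0"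
    using assms by linarith+
  from 2 have "\<forall>i\<in>ks k - {j}. lk k i = 0" by simp
  then have "\<forall>i. i \<noteq> j \<longrightarrow> lk k i = 0" by (auto simp: in_keys_iff)
  with 1 have "k = ej j" by (intro poly_mapping_eqI) (auto simp: lookup_ej)
  then show ?thesis by blast
qed

lemma finite_bounded_midx: "finite {k::midx. \<forall>j. lk k j \<le> lk b j}"
proof -
  let ?A = "{k::midx. \<forall>j. lk k j \<le> lk b j}"
  have "lk ` ?A \<subseteq> {f. \<forall>x. (x \<in> ks b \<longrightarrow> f x \<in> {0..midx_abs b}) \<and> (x \<notin> ks b \<longrightarrow> f x = 0)}"
  proof (clarsimp, intro conjI allI impI)
    fix k x assume "\<forall>j. lk k j \<le> lk b j" "x \<in> ks b"
    then show "lk k x \<le> midx_abs b" unfolding midx_abs_def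
      by (meson finite_keys le_trans member_le_sum zero_le)
  next
    fix k x assume "\<forall>j. lk k j \<le> lk b j" "x \<notin> ks b"
    then show "lk k x = 0" by (metis in_keys_iff le_zero_eq)
  qed
  moreover have "finite {f. \<forall>x. (x \<in> ks b \<longrightarrow> f x \<in> {0..midx_abs b}) \<and> (x \<notin> ks b \<longrightarrow> f x = (0::nat))}"
    by (rule finite_set_of_finite_funs) auto
  ultimately have "finite (lk ` ?A)" by (rule finite_subset)
  moreover have "inj_on lk ?A" by (rule inj_onI, rule poly_mapping_eqI) simp
  ultimately show ?thesis using finite_imageD by blast
qed

definition Kset :: "midx \<Rightarrow> midx \<Rightarrow> midx set" where
  "Kset b c = {k::midx. \<forall>j. lk k j \<le> min (lk b j) (lk c j)}"

lemma finite_Kset: "finite (Kset b c)"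
  by (rule finite_subset[OF _ finite_bounded_midx[of b]]) (auto simp: Kset_def)

lemma lookup_mon_mult: "lk (mon_mult g h) x =
   (\<Sum>k\<in>Kset (snd g) (fst h). if (fst g + fst h - k, snd g + snd h - k) = x then nord_coeff (snd g) (fst h) k else 0)"
  unfolding mon_mult_def Kset_def[symmetric] by (simp add: lookup_sum lookup_single when_def)

definition mm2 :: "widx \<Rightarrow> widx \<Rightarrow> weyl" where
  "mm2 p q = (\<Sum>j\<in>ks (snd p) \<inter> ks (fst q).
      sg (fst p + fst q - ej j, snd p + snd q - ej j) (of_nat (lk (snd p) j * lk (fst q) j)))"

definition pbm :: "widx \<Rightarrow> widx \<Rightarrow> weyl" where
  "pbm p q = mm2 p q - mm2 q p"

lemma nord_coeff_0: "nord_coeff b c 0 = 1"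
  by (simp add: nord_coeff_def)

lemma keys_ej[simp]: "ks (ej j) = {j}"
  by (simp add: ej_def)

lemma nord_coeff_ej: "nord_coeff b c (ej j) = of_nat (lk b j * lk c j)"
  by (simp add: nord_coeff_def lookup_ej)

lemma widx_abs_sub:
  assumes "\<forall>j. lk k j \<le> lk b j" "\<forall>j. lk k j \<le> lk c j"
  shows "widx_abs (a + c - k, b + d - k) + 2 * midx_abs k = midx_abs a + midx_abs b + midx_abs c + midx_abs d"
proof -
  have 1: "\<forall>j. lk k j \<le> lk (a + c) j" using assms by (simp add: lookup_add add_increasing)
  have 2: "\<forall>j. lk k j \<le> lk (b + d) j" using assms by (simp add: lookup_add trans_le_add1)
  show ?thesis unfolding widx_abs_def using midx_abs_diff[OF 1] midx_abs_diff[OF 2]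
    by (simp add: midx_abs_add)
qed

lemma mon_mult_top:
  assumes "widx_abs p + widx_abs q \<le> widx_abs x + 2"
  shows "lk (mon_mult p q) x = (if (fst p + fst q, snd p + snd q) = x then 1 else 0) + lk (mm2 p q) x"
proof -
  define b where "b = snd p"
  define c where "c = fst q"
  define J where "J = ks b \<inter> ks c"
  define F where "F k = (if (fst p + c - k, b + snd q - k) = x then nord_coeff b c k else 0)" for k
  define K' where "K' = insert 0 (ej ` J)"
  have fJ: "finite J" unfolding J_def by simp
  have sub: "K' \<subseteq> Kset b c"
    unfolding K'_def Kset_def J_def by (auto simp: lookup_ej in_keys_iff Suc_le_eq)
  have zero: "\<forall>k\<in>Kset b c - K'. F k = 0"
  proof
    fix k assume k: "k \<in> Kset b c - K'"
    show "F k = 0"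
    proof (rule ccontr)
      assume "F k \<noteq> 0"
      then have eq: "(fst p + c - k, b + snd q - k) = x" unfolding F_def by (auto split: if_splits)
      have kb: "\<forall>j. lk k j \<le> lk b j" and kc: "\<forall>j. lk k j \<le> lk c j" using k by (auto simp: Kset_def)
      have "widx_abs x + 2 * midx_abs k = widx_abs p + widx_abs q"
        using widx_abs_sub[OF kb kc, of "fst p" "snd q"] eq
        unfolding widx_abs_def b_def c_def by simp
      with assms have "midx_abs k \<le> 1" by linarith
      moreover have "midx_abs k \<noteq> 0" using k midx_abs_eq0 unfolding K'_def by auto
      ultimately have "midx_abs k = 1" by simp
      then obtain j where kj: "k = ej j" using midx_abs_1 by blast
      have "j \<in> J" using kb kc unfolding kj J_def
        by (auto simp: lookup_ej in_keys_iff dest: spec[of _ j])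
      then show False using k kj unfolding K'_def by auto
    qed
  qed
  have "lk (mon_mult p q) x = sum F (Kset b c)"
    unfolding lookup_mon_mult F_def b_def c_def ..
  also have "\<dots> = sum F K'"
    by (rule sum.mono_neutral_right[OF finite_Kset sub zero])
  also have "\<dots> = F 0 + sum F (ej ` J)"
    unfolding K'_def using fJ by (subst sum.insert) auto
  also have "sum F (ej ` J) = sum (F \<circ> ej) J"
    by (rule sum.reindex) (auto simp: inj_on_def ej_inj)
  also have "F 0 = (if (fst p + fst q, snd p + snd q) = x then 1 else 0)"
    unfolding F_def b_def c_def by (simp add: nord_coeff_0)
  also have "sum (F \<circ> ej) J = lk (mm2 p q) x"
    unfolding mm2_def lookup_sum F_def J_def b_def c_def
    by (intro sum.cong refl) (simp add: lookup_single when_def nord_coeff_ej)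
  finally show ?thesis .
qed

lemma mon_comm_top:
  assumes "widx_abs p + widx_abs q \<le> widx_abs x + 2"
  shows "lk (mon_mult p q) x - lk (mon_mult q p) x = lk (pbm p q) x"
proof -
  have a2: "widx_abs q + widx_abs p \<le> widx_abs x + 2" using assms by simp
  show ?thesis unfolding mon_mult_top[OF assms] mon_mult_top[OF a2] pbm_def lookup_minus
    by (simp add: add.commute)
qed

definition PB :: "weyl \<Rightarrow> weyl \<Rightarrow> weyl" where
  "PB s t = (\<Sum>p\<in>ks s. \<Sum>q\<in>ks t. wscale (lk s p * lk t q) (pbm p q))"

definition approx :: "weyl \<Rightarrow> nat \<Rightarrow> weyl \<Rightarrow> bool" where
  "approx f D s \<longleftrightarrow> (\<forall>x. D \<le> widx_abs x \<longrightarrow> lk f x = lk s x) \<and> (\<forall>x. lk s x \<noteq> 0 \<longrightarrow> widx_abs x = D)"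

lemma wscale_0[simp]: "wscale 0 f = 0"
  by (rule poly_mapping_eqI) simp

lemma PB_superset:
  assumes "finite P" "ks s \<subseteq> P" "finite Q" "ks t \<subseteq> Q"
  shows "PB s t = (\<Sum>p\<in>P. \<Sum>q\<in>Q. wscale (lk s p * lk t q) (pbm p q))"
proof -
  have "PB s t = (\<Sum>p\<in>P. \<Sum>q\<in>ks t. wscale (lk s p * lk t q) (pbm p q))"
    unfolding PB_def by (rule sum.mono_neutral_left[OF assms(1,2)]) (auto simp: in_keys_iff)
  also have "\<dots> = (\<Sum>p\<in>P. \<Sum>q\<in>Q. wscale (lk s p * lk t q) (pbm p q))"
    by (intro sum.cong refl sum.mono_neutral_left[OF assms(3,4)]) (auto simp: in_keys_iff)
  finally show ?thesis .
qed

lemma lookup_wmult: "lk (wmult f g) x = (\<Sum>p\<in>ks f. \<Sum>q\<in>ks g. lk f p * lk g q * lk (mon_mult p q) x)"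
  unfolding wmult_def by (simp add: lookup_sum)

lemma lookup_wcomm: "lk (wcomm f g) x =
   (\<Sum>p\<in>ks f. \<Sum>q\<in>ks g. lk f p * lk g q * (lk (mon_mult p q) x - lk (mon_mult q p) x))"
proof -
  have "lk (wmult g f) x = (\<Sum>p\<in>ks f. \<Sum>q\<in>ks g. lk f p * lk g q * lk (mon_mult q p) x)"
    unfolding lookup_wmult by (subst sum.swap) (simp add: mult.commute)
  then show ?thesis unfolding wcomm_def lookup_minus lookup_wmult
    by (simp add: sum_subtractf right_diff_distrib)
qed

lemma mm2_hom: "lk (mm2 p q) x \<noteq> 0 \<Longrightarrow> widx_abs x + 2 = widx_abs p + widx_abs q"
proof -
  assume "lk (mm2 p q) x \<noteq> 0"
  then obtain j where j: "j \<in> ks (snd p) \<inter> ks (fst q)"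
      and eq: "(fst p + fst q - ej j, snd p + snd q - ej j) = x"
    unfolding mm2_def lookup_sum by (auto simp: lookup_single when_def elim!: sum.not_neutral_contains_not_neutral split: if_splits)
  have kb: "\<forall>i. lk (ej j) i \<le> lk (snd p) i" "\<forall>i. lk (ej j) i \<le> lk (fst q) i"
    using j by (auto simp: lookup_ej in_keys_iff Suc_le_eq)
  show ?thesis using widx_abs_sub[OF kb, of "fst p" "snd q"] eq unfolding widx_abs_def by simp
qed

lemma pbm_hom: "lk (pbm p q) x \<noteq> 0 \<Longrightarrow> widx_abs x + 2 = widx_abs p + widx_abs q"
  unfolding pbm_def lookup_minus using mm2_hom[of p q x] mm2_hom[of q p x]
  by (cases "lk (mm2 p q) x = 0") (auto simp: add.commute)

lemma PB_hom:
  assumes "\<forall>x. lk s x \<noteq> 0 \<longrightarrow> widx_abs x = D1" "\<forall>x. lk t x \<noteq> 0 \<longrightarrow> widx_abs x = D2"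
    "lk (PB s t) x \<noteq> 0"
  shows "widx_abs x + 2 = D1 + D2"
proof -
  from assms(3) obtain p q where "lk s p * lk t q * lk (pbm p q) x \<noteq> 0"
    unfolding PB_def lookup_sum by (auto elim!: sum.not_neutral_contains_not_neutral)
  then have "lk s p \<noteq> 0" "lk t q \<noteq> 0" "lk (pbm p q) x \<noteq> 0" by auto
  then have "widx_abs p = D1" "widx_abs q = D2" "widx_abs x + 2 = widx_abs p + widx_abs q"
    using assms(1,2) pbm_hom[of p q x] by blast+
  then show ?thesis by simp
qed

lemma approx_comm:
  assumes f: "approx f D1 s" and g: "approx g D2 t" and D: "2 \<le> D1 + D2"
  shows "approx (wcomm f g) (D1 + D2 - 2) (PB s t)"
  unfolding approx_def
proof (intro conjI allI impI)
  fix x assume x: "D1 + D2 - 2 \<le> widx_abs x"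
  have fs: "\<And>p. D1 \<le> widx_abs p \<Longrightarrow> lk f p = lk s p" and sh: "\<And>p. lk s p \<noteq> 0 \<Longrightarrow> widx_abs p = D1"
    using f unfolding approx_def by auto
  have gt: "\<And>p. D2 \<le> widx_abs p \<Longrightarrow> lk g p = lk t p" and th: "\<And>p. lk t p \<noteq> 0 \<Longrightarrow> widx_abs p = D2"
    using g unfolding approx_def by auto
  have tm: "lk f p * lk g q * (lk (mon_mult p q) x - lk (mon_mult q p) x) = lk s p * lk t q * lk (pbm p q) x" for p q
  proof (cases "D1 < widx_abs p \<or> D2 < widx_abs q")
    case True
    have z1: "lk s p = 0" if "D1 < widx_abs p" using sh[of p] that by (metis less_irrefl)
    have z2: "lk t q = 0" if "D2 < widx_abs q" using th[of q] that by (metis less_irrefl)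
    have "lk f p * lk g q = 0 \<and> lk s p * lk t q = 0"
    proof (cases "D1 < widx_abs p")
      case True then show ?thesis using z1 fs[of p] by simp
    next
      case False then have "D2 < widx_abs q" using \<open>D1 < widx_abs p \<or> D2 < widx_abs q\<close> by simp
      then show ?thesis using z2 gt[of q] by simp
    qed
    then show ?thesis by (metis mult_zero_left)
  next
    case False
    then have "widx_abs p + widx_abs q \<le> widx_abs x + 2" using x D by linarith
    note mc = mon_comm_top[OF this]
    show ?thesis
    proof (cases "widx_abs p = D1 \<and> widx_abs q = D2")
      case True then show ?thesis using fs[of p] gt[of q] mc by simp
    next
      case F2: False
      then have "lk s p * lk t q = 0" using sh[of p] th[of q] by auto
      moreover have "lk (pbm p q) x = 0" using pbm_hom[of p q x] F2 False x D by linarith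
      ultimately show ?thesis using mc by simp
    qed
  qed
  have ksf: "ks s \<subseteq> ks f" using fs sh by (auto simp: in_keys_iff)
  have ksg: "ks t \<subseteq> ks g" using gt th by (auto simp: in_keys_iff)
  have "lk (wcomm f g) x = (\<Sum>p\<in>ks f. \<Sum>q\<in>ks g. lk s p * lk t q * lk (pbm p q) x)"
    unfolding lookup_wcomm tm ..
  also have "\<dots> = lk (PB s t) x"
    unfolding PB_superset[OF finite_keys ksf finite_keys ksg] by (simp add: lookup_sum)
  finally show "lk (wcomm f g) x = lk (PB s t) x" .
next
  fix x assume "lk (PB s t) x \<noteq> 0"
  then show "widx_abs x = D1 + D2 - 2"
    using PB_hom[of s D1 t D2 x] f g unfolding approx_def by auto
qed

lemma pm_sum_singles: "(G::'a \<Rightarrow>\<^sub>0 'b::comm_monoid_add) = (\<Sum>m\<in>ks G. sg m (lk G m))"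
proof (rule poly_mapping_eqI)
  fix x
  show "lk G x = lk (\<Sum>m\<in>ks G. sg m (lk G m)) x"
  proof (cases "x \<in> ks G")
    case True
    then show ?thesis unfolding lookup_sum
      by (simp add: lookup_single when_def sum.delta)
  next
    case False
    then show ?thesis unfolding lookup_sum
      by (auto simp: lookup_single when_def in_keys_iff intro!: sum.neutral)
  qed
qed

lemma pm_induct[case_names zero single add]:
  fixes G :: "'a \<Rightarrow>\<^sub>0 'b::comm_monoid_add"
  assumes "P 0" "\<And>m c. P (sg m c)" "\<And>f g. P f \<Longrightarrow> P g \<Longrightarrow> P (f + g)"
  shows "P G"
proof -
  have "P (\<Sum>m\<in>S. sg m (lk G m))" if "finite S" for S
    using that by (induction S rule: finite_induct) (auto intro: assms)
  then show ?thesis by (subst pm_sum_singles) simp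
qed

lemma lookup_scal: "lk (sg 0 c * (G :: midx \<Rightarrow>\<^sub>0 complex)) m = c * lk G m"
  unfolding mult_map_scale_conv_mult[symmetric] by (simp add: map.rep_eq when_def)

lemma wscale_add: "wscale c (f + g) = wscale c f + wscale c g"
  by (rule poly_mapping_eqI) (simp add: lookup_add algebra_simps)
lemma wscale_add2: "wscale (a + b) f = wscale a f + wscale b f"
  by (rule poly_mapping_eqI) (simp add: lookup_add algebra_simps)
lemma wscale_wscale: "wscale a (wscale b f) = wscale (a * b) f"
  by (rule poly_mapping_eqI) (simp add: algebra_simps)
lemma wscale_minus: "wscale a (- f) = - wscale a f"
  by (rule poly_mapping_eqI) simp
lemma wscale_zero[simp]: "wscale a 0 = 0"
  by (rule poly_mapping_eqI) simp
lemma wscale_one[simp]: "wscale 1 f = f"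
  by (rule poly_mapping_eqI) simp
lemma wscale_sum: "wscale a (sum f S) = (\<Sum>i\<in>S. wscale a (f i))"
  by (rule poly_mapping_eqI) (simp add: lookup_sum sum_distrib_left)
lemma wscale_single: "wscale a (sg x c) = sg x (a * c)"
  by (rule poly_mapping_eqI) (simp add: lookup_single when_def)

lemma pbm_antisym: "pbm q p = - pbm p q"
  unfolding pbm_def by (rule minus_diff_eq[symmetric])

lemma PB_antisym: "PB t s = - PB s t"
proof -
  have "PB t s = (\<Sum>p\<in>ks s. \<Sum>q\<in>ks t. wscale (lk t q * lk s p) (pbm q p))"
    unfolding PB_def by (rule sum.swap)
  also have "\<dots> = (\<Sum>p\<in>ks s. \<Sum>q\<in>ks t. - wscale (lk s p * lk t q) (pbm p q))"
    by (intro sum.cong refl, subst pbm_antisym[of q p for p q]) (simp add: wscale_minus mult.commute)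
  also have "\<dots> = - PB s t" unfolding PB_def by (simp only: sum_negf)
  finally show ?thesis .
qed

lemma PB_self: "PB s s = 0"
proof -
  have "PB s s = - PB s s" by (rule PB_antisym)
  then have "lk (PB s s) x = - lk (PB s s) x" for x by (metis lookup_uminus)
  then have "lk (PB s s) x = 0" for x by (auto simp: complex_eq_iff)
  then show ?thesis by (intro poly_mapping_eqI) simp
qed

lemma PB_add_left: "PB (s1 + s2) t = PB s1 t + PB s2 t"
proof -
  let ?P = "ks s1 \<union> ks s2"
  have f: "finite ?P" by simp
  have e: "PB (s1 + s2) t = (\<Sum>p\<in>?P. \<Sum>q\<in>ks t. wscale (lk (s1 + s2) p * lk t q) (pbm p q))"
    by (rule PB_superset[OF f keys_add_sub finite_keys subset_refl])
  have e1: "PB s1 t = (\<Sum>p\<in>?P. \<Sum>q\<in>ks t. wscale (lk s1 p * lk t q) (pbm p q))"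
    by (rule PB_superset) auto
  have e2: "PB s2 t = (\<Sum>p\<in>?P. \<Sum>q\<in>ks t. wscale (lk s2 p * lk t q) (pbm p q))"
    by (rule PB_superset) auto
  show ?thesis unfolding e e1 e2
    by (simp add: lookup_add algebra_simps wscale_add2 sum.distrib)
qed

lemma PB_scale_left: "PB (wscale c s) t = wscale c (PB s t)"
proof -
  have k: "ks (wscale c s) \<subseteq> ks s" by (auto simp: in_keys_iff)
  have e: "PB (wscale c s) t = (\<Sum>p\<in>ks s. \<Sum>q\<in>ks t. wscale (lk (wscale c s) p * lk t q) (pbm p q))"
    by (rule PB_superset[OF finite_keys k finite_keys subset_refl])
  show ?thesis
    unfolding e by (simp add: PB_def wscale_sum wscale_wscale mult.assoc)
qed

lemma PB_zero_left[simp]: "PB 0 t = 0" by (simp add: PB_def)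
lemma PB_zero_right[simp]: "PB t 0 = 0" by (simp add: PB_def)

lemma PB_add_right: "PB t (s1 + s2) = PB t s1 + PB t s2"
proof -
  have "PB t (s1 + s2) = - PB (s1 + s2) t" by (rule PB_antisym)
  also have "\<dots> = - (PB s1 t + PB s2 t)" by (simp only: PB_add_left)
  also have "\<dots> = PB t s1 + PB t s2" using PB_antisym[of s1 t] PB_antisym[of s2 t] by simp
  finally show ?thesis .
qed

lemma PB_scale_right: "PB t (wscale c s) = wscale c (PB t s)"
proof -
  have "PB t (wscale c s) = - PB (wscale c s) t" by (rule PB_antisym)
  also have "\<dots> = - wscale c (PB s t)" by (simp only: PB_scale_left)
  also have "\<dots> = wscale c (PB t s)" using PB_antisym[of s t] by (simp add: wscale_minus)
  finally show ?thesis .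
qed

lemma PB_single: "PB (sg x a) (sg y b) = wscale (a * b) (pbm x y)"
proof -
  have "PB (sg x a) (sg y b) = (\<Sum>p\<in>{x}. \<Sum>q\<in>{y}. wscale (lk (sg x a) p * lk (sg y b) q) (pbm p q))"
    by (rule PB_superset) auto
  then show ?thesis by simp
qed

definition lift :: "('a \<Rightarrow> 'b) \<Rightarrow> ('a \<Rightarrow>\<^sub>0 complex) \<Rightarrow> ('b \<Rightarrow>\<^sub>0 complex)" where
  "lift \<phi> G = (\<Sum>m\<in>ks G. sg (\<phi> m) (lk G m))"

lemma lift_superset: "finite P \<Longrightarrow> ks G \<subseteq> P \<Longrightarrow> lift \<phi> G = (\<Sum>m\<in>P. sg (\<phi> m) (lk G m))"
  unfolding lift_def by (rule sum.mono_neutral_left) (auto simp: in_keys_iff)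

lemma lift_add: "lift \<phi> (F + G) = lift \<phi> F + lift \<phi> G"
proof -
  let ?P = "ks F \<union> ks G"
  have "lift \<phi> (F + G) = (\<Sum>m\<in>?P. sg (\<phi> m) (lk (F + G) m))"
    by (rule lift_superset[OF _ keys_add_sub]) simp
  also have "\<dots> = (\<Sum>m\<in>?P. sg (\<phi> m) (lk F m)) + (\<Sum>m\<in>?P. sg (\<phi> m) (lk G m))"
    by (simp add: lookup_add single_add sum.distrib)
  also have "\<dots> = lift \<phi> F + lift \<phi> G"
    by (simp add: lift_superset[of ?P])
  finally show ?thesis .
qed

lemma lift_zero[simp]: "lift \<phi> 0 = 0" by (simp add: lift_def)

lemma lift_single[simp]: "lift \<phi> (sg m c) = sg (\<phi> m) c"
proof -
  have "lift \<phi> (sg m c) = (\<Sum>m'\<in>{m}. sg (\<phi> m') (lk (sg m c) m'))"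
    by (rule lift_superset) auto
  then show ?thesis by simp
qed

lemma lift_scal: "lift (\<phi>::midx \<Rightarrow> widx) (sg 0 c * G) = wscale c (lift \<phi> G)"
proof -
  have k: "ks (sg 0 c * G) \<subseteq> ks G" by (auto simp: in_keys_iff lookup_scal)
  have e: "lift \<phi> (sg 0 c * G) = (\<Sum>m\<in>ks G. sg (\<phi> m) (lk (sg 0 c * G) m))"
    by (rule lift_superset[OF finite_keys k])
  show ?thesis unfolding e by (simp add: lift_def wscale_sum lookup_scal wscale_single)
qed

lemma lift_sum: "lift \<phi> (sum f S) = (\<Sum>i\<in>S. lift \<phi> (f i))"
  by (induction S rule: infinite_finite_induct) (auto simp: lift_add)

abbreviation Tm :: "widx \<Rightarrow> (midx \<Rightarrow>\<^sub>0 complex) \<Rightarrow> weyl" where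
  "Tm u \<equiv> lift (\<lambda>m. (fst u + m, snd u + m))"
abbreviation rl :: "(midx \<Rightarrow>\<^sub>0 complex) \<Rightarrow> weyl" where
  "rl \<equiv> lift (\<lambda>m. (m, m))"

definition dlt :: "midx \<Rightarrow> midx \<Rightarrow> nat \<Rightarrow> complex" where
  "dlt a b j = of_nat (lk b j) - of_nat (lk a j)"

definition Dm :: "midx \<Rightarrow> midx \<Rightarrow> midx \<Rightarrow> (midx \<Rightarrow>\<^sub>0 complex)" where
  "Dm a b M = (\<Sum>j\<in>ks M. sg (M - ej j) (dlt a b j * of_nat (lk M j)))"

definition dd :: "midx \<Rightarrow> midx \<Rightarrow> (midx \<Rightarrow>\<^sub>0 complex) \<Rightarrow> (midx \<Rightarrow>\<^sub>0 complex)" where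
  "dd a b G = (\<Sum>m\<in>ks G. sg 0 (lk G m) * Dm a b m)"

lemma dd_superset: "finite P \<Longrightarrow> ks G \<subseteq> P \<Longrightarrow> dd a b G = (\<Sum>m\<in>P. sg 0 (lk G m) * Dm a b m)"
  unfolding dd_def by (rule sum.mono_neutral_left) (auto simp: in_keys_iff)

lemma dd_add: "dd a b (F + G) = dd a b F + dd a b G"
proof -
  let ?P = "ks F \<union> ks G"
  have "dd a b (F + G) = (\<Sum>m\<in>?P. sg 0 (lk (F + G) m) * Dm a b m)"
    by (rule dd_superset[OF _ keys_add_sub]) simp
  also have "\<dots> = (\<Sum>m\<in>?P. sg 0 (lk F m) * Dm a b m) + (\<Sum>m\<in>?P. sg 0 (lk G m) * Dm a b m)"
    by (simp add: lookup_add single_add sum.distrib distrib_right)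
  also have "\<dots> = dd a b F + dd a b G"
    by (simp add: dd_superset[of ?P])
  finally show ?thesis .
qed

lemma dd_zero[simp]: "dd a b 0 = 0" by (simp add: dd_def)

lemma dd_single: "dd a b (sg m c) = sg 0 c * Dm a b m"
proof -
  have "dd a b (sg m c) = (\<Sum>m'\<in>{m}. sg 0 (lk (sg m c) m') * Dm a b m')"
    by (rule dd_superset) auto
  then show ?thesis by simp
qed

definition Lp :: "midx \<Rightarrow> midx \<Rightarrow> nat \<Rightarrow> complex poly" where
  "Lp a b j = [:1, dlt a b j:]"

definition Emon :: "midx \<Rightarrow> midx \<Rightarrow> midx \<Rightarrow> complex poly" where
  "Emon a b m = (\<Prod>j\<in>ks m. Lp a b j ^ lk m j)"

definition EE :: "midx \<Rightarrow> midx \<Rightarrow> (midx \<Rightarrow>\<^sub>0 complex) \<Rightarrow> complex poly" where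
  "EE a b G = (\<Sum>m\<in>ks G. smult (lk G m) (Emon a b m))"

lemma Emon_superset: "finite S \<Longrightarrow> ks m \<subseteq> S \<Longrightarrow> Emon a b m = (\<Prod>j\<in>S. Lp a b j ^ lk m j)"
  unfolding Emon_def by (rule prod.mono_neutral_left) (auto simp: in_keys_iff)

lemma Emon_add: "Emon a b (m + m') = Emon a b m * Emon a b m'"
proof -
  let ?S = "ks m \<union> ks m'"
  have "Emon a b (m + m') = (\<Prod>j\<in>?S. Lp a b j ^ lk (m + m') j)"
    by (rule Emon_superset[OF _ keys_add_sub]) simp
  also have "\<dots> = (\<Prod>j\<in>?S. Lp a b j ^ lk m j) * (\<Prod>j\<in>?S. Lp a b j ^ lk m' j)"
    by (simp add: lookup_add power_add prod.distrib)
  also have "\<dots> = Emon a b m * Emon a b m'"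
    by (simp add: Emon_superset[of ?S])
  finally show ?thesis .
qed

lemma Emon_0[simp]: "Emon a b 0 = 1" by (simp add: Emon_def)

lemma EE_superset: "finite P \<Longrightarrow> ks G \<subseteq> P \<Longrightarrow> EE a b G = (\<Sum>m\<in>P. smult (lk G m) (Emon a b m))"
  unfolding EE_def by (rule sum.mono_neutral_left) (auto simp: in_keys_iff)

lemma EE_add: "EE a b (F + G) = EE a b F + EE a b G"
proof -
  let ?P = "ks F \<union> ks G"
  have "EE a b (F + G) = (\<Sum>m\<in>?P. smult (lk (F + G) m) (Emon a b m))"
    by (rule EE_superset[OF _ keys_add_sub]) simp
  also have "\<dots> = (\<Sum>m\<in>?P. smult (lk F m) (Emon a b m)) + (\<Sum>m\<in>?P. smult (lk G m) (Emon a b m))"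
    by (simp add: lookup_add smult_add_left sum.distrib)
  also have "\<dots> = EE a b F + EE a b G"
    by (simp add: EE_superset[of ?P])
  finally show ?thesis .
qed

lemma EE_zero[simp]: "EE a b 0 = 0" by (simp add: EE_def)

lemma EE_single: "EE a b (sg m c) = smult c (Emon a b m)"
proof -
  have "EE a b (sg m c) = (\<Sum>m'\<in>{m}. smult (lk (sg m c) m') (Emon a b m'))"
    by (rule EE_superset) auto
  then show ?thesis by simp
qed

lemma EE_sum: "EE a b (sum f S) = (\<Sum>i\<in>S. EE a b (f i))"
  by (induction S rule: infinite_finite_induct) (auto simp: EE_add)

lemma EE_mult: "EE a b (F * G) = EE a b F * EE a b G"
proof (induction F rule: pm_induct)
  case zero then show ?case by simp
next
  case (add f g) then show ?case by (simp add: distrib_right EE_add)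
next
  case (single m c)
  show ?case
  proof (induction G rule: pm_induct)
    case zero then show ?case by simp
  next
    case (add f g) then show ?case by (simp add: distrib_left EE_add)
  next
    case (single m' c')
    show ?case by (simp add: mult_single EE_single Emon_add mult.commute mult.left_commute)
  qed
qed

lemma EE_Dm: "EE a b (Dm a b M) = pderiv (Emon a b M)"
proof -
  have t: "smult (dlt a b j * of_nat (lk M j)) (Emon a b (M - ej j)) =
      (\<Prod>i\<in>ks M - {j}. Lp a b i ^ lk M i) * pderiv (Lp a b j ^ lk M j)" if j: "j \<in> ks M" for j
  proof -
    have "Emon a b (M - ej j) = (\<Prod>i\<in>ks M. Lp a b i ^ lk (M - ej j) i)"
      by (rule Emon_superset) (auto simp: in_keys_iff lookup_minus lookup_ej)
    also have "\<dots> = Lp a b j ^ lk (M - ej j) j * (\<Prod>i\<in>ks M - {j}. Lp a b i ^ lk (M - ej j) i)"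
      by (rule prod.remove[OF finite_keys j])
    also have "(\<Prod>i\<in>ks M - {j}. Lp a b i ^ lk (M - ej j) i) = (\<Prod>i\<in>ks M - {j}. Lp a b i ^ lk M i)"
      by (intro prod.cong) (auto simp: lookup_minus lookup_ej)
    finally have e: "Emon a b (M - ej j) = Lp a b j ^ (lk M j - 1) * (\<Prod>i\<in>ks M - {j}. Lp a b i ^ lk M i)"
      by (simp add: lookup_minus lookup_ej)
    have d: "pderiv (Lp a b j) = [:dlt a b j:]" by (simp add: Lp_def pderiv_pCons)
    show ?thesis unfolding e pderiv_power d
      by (simp add: mult_ac)
  qed
  have "EE a b (Dm a b M) = (\<Sum>j\<in>ks M. smult (dlt a b j * of_nat (lk M j)) (Emon a b (M - ej j)))"
    unfolding Dm_def EE_sum EE_single ..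
  also have "\<dots> = (\<Sum>j\<in>ks M. (\<Prod>i\<in>ks M - {j}. Lp a b i ^ lk M i) * pderiv (Lp a b j ^ lk M j))"
    by (rule sum.cong[OF refl t])
  also have "\<dots> = pderiv (Emon a b M)"
    unfolding Emon_def pderiv_prod ..
  finally show ?thesis .
qed

lemma EE_dd: "EE a b (dd a b G) = pderiv (EE a b G)"
proof (induction G rule: pm_induct)
  case zero then show ?case by simp
next
  case (add f g) then show ?case by (simp add: dd_add EE_add pderiv_add)
next
  case (single m c)
  show ?case by (simp add: dd_single EE_mult EE_single EE_Dm pderiv_smult)
qed

lemma mm2_superset:
  assumes "finite S" "ks (snd p) \<inter> ks (fst q) \<subseteq> S"
  shows "mm2 p q = (\<Sum>j\<in>S. sg (fst p + fst q - ej j, snd p + snd q - ej j) (of_nat (lk (snd p) j * lk (fst q) j)))"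
  unfolding mm2_def
proof (rule sum.mono_neutral_left[OF assms])
  show "\<forall>i\<in>S - ks (snd p) \<inter> ks (fst q). sg (fst p + fst q - ej i, snd p + snd q - ej i) (of_nat (lk (snd p) i * lk (fst q) i)) = 0"
  proof
    fix i assume "i \<in> S - ks (snd p) \<inter> ks (fst q)"
    then have "lk (snd p) i = 0 \<or> lk (fst q) i = 0" by (auto simp: in_keys_iff)
    then show "sg (fst p + fst q - ej i, snd p + snd q - ej i) (of_nat (lk (snd p) i * lk (fst q) i)) = 0" by auto
  qed
qed

lemma ej_sub: "j \<in> ks y \<Longrightarrow> c + y - ej j = c + (y - ej j)"
  by (rule poly_mapping_eqI) (auto simp: lookup_add lookup_minus lookup_ej in_keys_iff)

lemma pbm_M3: "pbm (a + x, b + x) (y, y) = Tm (a, b) (sg x 1 * Dm a b y)"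
proof -
  have 1: "mm2 (a + x, b + x) (y, y) = (\<Sum>j\<in>ks y. sg (a + x + y - ej j, b + x + y - ej j) (of_nat (lk (b + x) j * lk y j)))"
    by (subst mm2_superset[where S = "ks y"]) auto
  have 2: "mm2 (y, y) (a + x, b + x) = (\<Sum>j\<in>ks y. sg (y + (a + x) - ej j, y + (b + x) - ej j) (of_nat (lk y j * lk (a + x) j)))"
    by (subst mm2_superset[where S = "ks y"]) auto
  have 3: "Tm (a, b) (sg x 1 * Dm a b y) = (\<Sum>j\<in>ks y. sg (a + (x + (y - ej j)), b + (x + (y - ej j))) (dlt a b j * of_nat (lk y j)))"
    unfolding Dm_def sum_distrib_left mult_single lift_sum by simp
  have "pbm (a + x, b + x) (y, y) = (\<Sum>j\<in>ks y. sg (a + (x + (y - ej j)), b + (x + (y - ej j))) (dlt a b j * of_nat (lk y j)))"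
    unfolding pbm_def 1 2 sum_subtractf[symmetric]
  proof (rule sum.cong[OF refl])
    fix j assume j: "j \<in> ks y"
    have e1: "a + x + y - ej j = a + (x + (y - ej j))" "b + x + y - ej j = b + (x + (y - ej j))"
      using ej_sub[OF j, of "a + x"] ej_sub[OF j, of "b + x"] by (simp_all add: add.assoc)
    have e2: "y + (a + x) - ej j = a + (x + (y - ej j))" "y + (b + x) - ej j = b + (x + (y - ej j))"
      using e1 by (simp_all add: add.commute add.left_commute)
    show "sg (a + x + y - ej j, b + x + y - ej j) (of_nat (lk (b + x) j * lk y j)) -
          sg (y + (a + x) - ej j, y + (b + x) - ej j) (of_nat (lk y j * lk (a + x) j)) =
          sg (a + (x + (y - ej j)), b + (x + (y - ej j))) (dlt a b j * of_nat (lk y j))"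
      unfolding e1 e2 single_diff[symmetric] by (simp add: lookup_add dlt_def algebra_simps)
  qed
  then show ?thesis using 3 by simp
qed

lemma pbm_M1: "pbm (a + x, b + x) (b + y, a + y) = rl (Dm a b (a + b + x + y))"
proof -
  define M where "M = a + b + x + y"
  have 1: "mm2 (a + x, b + x) (b + y, a + y) = (\<Sum>j\<in>ks M. sg (M - ej j, M - ej j) (of_nat (lk (b + x) j * lk (b + y) j)))"
    by (subst mm2_superset[where S = "ks M"]) (auto simp: M_def in_keys_iff lookup_add ac_simps)
  have 2: "mm2 (b + y, a + y) (a + x, b + x) = (\<Sum>j\<in>ks M. sg (M - ej j, M - ej j) (of_nat (lk (a + y) j * lk (a + x) j)))"
    by (subst mm2_superset[where S = "ks M"]) (auto simp: M_def in_keys_iff lookup_add ac_simps)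
  have 3: "rl (Dm a b M) = (\<Sum>j\<in>ks M. sg (M - ej j, M - ej j) (dlt a b j * of_nat (lk M j)))"
    unfolding Dm_def lift_sum by simp
  have "pbm (a + x, b + x) (b + y, a + y) = (\<Sum>j\<in>ks M. sg (M - ej j, M - ej j) (dlt a b j * of_nat (lk M j)))"
    unfolding pbm_def 1 2 sum_subtractf[symmetric]
    by (rule sum.cong[OF refl]) (simp add: single_diff[symmetric] M_def lookup_add dlt_def algebra_simps)
  then show ?thesis using 3 M_def by simp
qed

lemma sg_scal: "sg (x::midx) c = sg 0 c * sg x (1::complex)"
  by (simp add: mult_single)

lemma PB_T12: "PB (Tm (a, b) A) (Tm (b, a) B) = rl (dd a b (A * B * sg (a + b) 1))"
proof (induction A arbitrary: B rule: pm_induct)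
  case zero then show ?case by simp
next
  case (add f g) then show ?case by (simp add: lift_add PB_add_left distrib_right dd_add)
next
  case (single x c)
  show ?case
  proof (induction B rule: pm_induct)
    case zero then show ?case by simp
  next
    case (add f g) then show ?case by (simp add: lift_add PB_add_right distrib_right distrib_left dd_add)
  next
    case (single y d)
    have l: "PB (Tm (a, b) (sg x c)) (Tm (b, a) (sg y d)) = wscale (c * d) (rl (Dm a b (a + b + x + y)))"
      by (simp add: PB_single pbm_M1)
    have r: "sg x c * sg y d * sg (a + b) 1 = sg (a + b + x + y) (c * d)"
      by (simp add: mult_single ac_simps)
    show ?case unfolding l r dd_single lift_scal ..
  qed
qed

lemma PB_T3: "PB (Tm (a, b) A) (rl H) = Tm (a, b) (A * dd a b H)"
proof (induction A arbitrary: H rule: pm_induct)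
  case zero then show ?case by simp
next
  case (add f g) then show ?case by (simp add: lift_add PB_add_left distrib_right)
next
  case (single x c)
  show ?case
  proof (induction H rule: pm_induct)
    case zero then show ?case by simp
  next
    case (add f g) then show ?case by (simp add: lift_add PB_add_right distrib_left dd_add)
  next
    case (single y d)
    have l: "PB (Tm (a, b) (sg x c)) (rl (sg y d)) = wscale (c * d) (Tm (a, b) (sg x 1 * Dm a b y))"
      by (simp add: PB_single pbm_M3)
    have r: "sg x c * dd a b (sg y d) = sg 0 (c * d) * (sg x 1 * Dm a b y)"
      unfolding dd_single by (subst sg_scal) (simp add: mult_single ac_simps)
    show ?case unfolding l r lift_scal ..
  qed
qed

lemma lift_uminus: "lift \<phi> (- G) = - lift \<phi> G"
proof -
  have "lift \<phi> (- G) + lift \<phi> G = 0" using lift_add[of \<phi> "- G" G] by simp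
  then show ?thesis by (simp add: eq_neg_iff_add_eq_0)
qed

lemma dlt_swap: "dlt b a j = - dlt a b j" by (simp add: dlt_def)

lemma Dm_swap: "Dm b a M = - Dm a b M"
  unfolding Dm_def sum_negf[symmetric] by (intro sum.cong refl) (simp add: dlt_swap[of b a] single_uminus)

lemma dd_swap: "dd b a H = - dd a b H"
  unfolding dd_def sum_negf[symmetric] by (intro sum.cong refl) (simp add: Dm_swap[of b a])

lemma PB_T3': "PB (Tm (b, a) A) (rl H) = - Tm (b, a) (A * dd a b H)"
  using PB_T3[of b a A H] by (simp add: dd_swap[of b a] lift_uminus)

lemma step1:
  "PB (wscale p1 (Tm (a, b) G) + wscale p2 (Tm (b, a) G)) (wscale m1 (Tm (a, b) G) + wscale m2 (Tm (b, a) G))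
     = wscale (p1 * m2 - p2 * m1) (rl (dd a b (G * G * sg (a + b) 1)))"
proof -
  define X where "X = Tm (a, b) G"
  define Y where "Y = Tm (b, a) G"
  have xy: "PB X Y = rl (dd a b (G * G * sg (a + b) 1))" unfolding X_def Y_def by (rule PB_T12)
  have yx: "PB Y X = - PB X Y" by (rule PB_antisym)
  have "PB (wscale p1 X + wscale p2 Y) (wscale m1 X + wscale m2 Y) = wscale (p1 * m2 - p2 * m1) (PB X Y)"
    apply (simp only: PB_add_left PB_add_right PB_scale_left PB_scale_right PB_self yx)
    apply (rule poly_mapping_eqI)
    apply (simp add: lookup_add algebra_simps)
    done
  then show ?thesis using xy unfolding X_def Y_def by simp
qed

lemma step2:
  "PB (wscale p1 (Tm (a, b) G) + wscale p2 (Tm (b, a) G)) (wscale k (rl H))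
     = wscale (k * p1) (Tm (a, b) (G * dd a b H)) + wscale (- (k * p2)) (Tm (b, a) (G * dd a b H))"
proof -
  have "PB (wscale p1 (Tm (a, b) G) + wscale p2 (Tm (b, a) G)) (wscale k (rl H)) =
     wscale k (wscale p1 (PB (Tm (a, b) G) (rl H)) + wscale p2 (PB (Tm (b, a) G) (rl H)))"
    by (simp only: PB_add_left PB_scale_left PB_scale_right wscale_add)
  also have "\<dots> = wscale (k * p1) (Tm (a, b) (G * dd a b H)) + wscale (- (k * p2)) (Tm (b, a) (G * dd a b H))"
    unfolding PB_T3'[where a=a and b=b and A=G and H=H] PB_T3[where a=a and b=b and A=G and H=H] by (rule poly_mapping_eqI) (simp add: lookup_add algebra_simps)
  finally show ?thesis .
qed

fun symc :: "weyl \<Rightarrow> weyl \<Rightarrow> nat \<Rightarrow> weyl \<times> weyl" where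
  "symc sp sm 0 = (sp, sm)"
| "symc sp sm (Suc l) = (let (p, m) = symc sp sm l; c = PB p m in (PB p c, PB m c))"

lemma poly_nonzero:
  fixes \<phi> \<rho> :: "complex poly"
  assumes "\<phi> \<noteq> 0" "2 \<le> degree \<rho>"
  shows "\<phi> * pderiv (pderiv (\<phi> * \<phi> * \<rho>)) \<noteq> 0"
proof -
  have r: "\<rho> \<noteq> 0" using assms(2) by auto
  have "degree (\<phi> * \<phi> * \<rho>) = degree \<phi> + degree \<phi> + degree \<rho>"
    using assms(1) r by (simp add: degree_mult_eq)
  then have d: "2 \<le> degree (\<phi> * \<phi> * \<rho>)" using assms(2) by linarith
  have "degree (pderiv (\<phi> * \<phi> * \<rho>)) \<noteq> 0" using d by (simp add: degree_pderiv)
  then have "pderiv (pderiv (\<phi> * \<phi> * \<rho>)) \<noteq> 0" by (simp add: pderiv_eq_0_iff)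
  then show ?thesis using assms(1) by simp
qed

lemma wadj_wmon: "wadj (wmon g) = sg (snd g, fst g) 1"
  by (simp add: wadj_def wmon_def)

lemma symc_form:
  assumes deg: "2 \<le> degree (EE a b (sg (a + b) 1))"
  shows "\<exists>G p1 p2 m1 m2. symc (gbasis SPlus (a, b)) (gbasis SMinus (a, b)) l =
      (wscale p1 (Tm (a, b) G) + wscale p2 (Tm (b, a) G), wscale m1 (Tm (a, b) G) + wscale m2 (Tm (b, a) G))
      \<and> p1 \<noteq> 0 \<and> m1 \<noteq> 0 \<and> p1 * m2 - p2 * m1 \<noteq> 0 \<and> EE a b G \<noteq> 0"
proof (induction l)
  case 0
  have t1: "Tm (a, b) (sg 0 1) = sg (a, b) 1" and t2: "Tm (b, a) (sg 0 1) = sg (b, a) 1" by (simp only: lift_single, simp)+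
  have "gbasis SPlus (a, b) = wscale \<i> (Tm (a, b) (sg 0 1)) + wscale \<i> (Tm (b, a) (sg 0 1))"
    unfolding t1 t2 gbasis_def wadj_wmon by (simp add: wmon_def wscale_add add.commute)
  moreover have "gbasis SMinus (a, b) = wscale (-1) (Tm (a, b) (sg 0 1)) + wscale 1 (Tm (b, a) (sg 0 1))"
    unfolding t1 t2 gbasis_def wadj_wmon
    by (rule poly_mapping_eqI) (simp add: wmon_def lookup_add lookup_minus)
  moreover have "EE a b (sg 0 1) \<noteq> 0" by (simp only: EE_single, simp)
  ultimately show ?case
    by (intro exI[of _ "sg 0 1"] exI[of _ \<i>] exI[of _ \<i>] exI[of _ "-1"] exI[of _ 1]) (simp add: complex_eq_iff)
next
  case (Suc l)
  then obtain G p1 p2 m1 m2 where st: "symc (gbasis SPlus (a, b)) (gbasis SMinus (a, b)) l =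
      (wscale p1 (Tm (a, b) G) + wscale p2 (Tm (b, a) G), wscale m1 (Tm (a, b) G) + wscale m2 (Tm (b, a) G))"
    and nz: "p1 \<noteq> 0" "m1 \<noteq> 0" "p1 * m2 - p2 * m1 \<noteq> 0" "EE a b G \<noteq> 0" by blast
  define k where "k = p1 * m2 - p2 * m1"
  define H where "H = dd a b (G * G * sg (a + b) 1)"
  define G' where "G' = G * dd a b H"
  have c: "PB (wscale p1 (Tm (a, b) G) + wscale p2 (Tm (b, a) G)) (wscale m1 (Tm (a, b) G) + wscale m2 (Tm (b, a) G))
       = wscale k (rl H)" unfolding k_def H_def by (rule step1)
  have s: "symc (gbasis SPlus (a, b)) (gbasis SMinus (a, b)) (Suc l) =
     (wscale (k * p1) (Tm (a, b) G') + wscale (- (k * p2)) (Tm (b, a) G'),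
      wscale (k * m1) (Tm (a, b) G') + wscale (- (k * m2)) (Tm (b, a) G'))"
    by (simp only: symc.simps st Let_def prod.case c step2 G'_def)
  have e: "EE a b G' = EE a b G * pderiv (pderiv (EE a b G * EE a b G * EE a b (sg (a + b) 1)))"
    unfolding G'_def H_def by (simp add: EE_mult EE_dd)
  have "EE a b G' \<noteq> 0" unfolding e by (rule poly_nonzero[OF nz(4) deg])
  moreover have "k * p1 * - (k * m2) - - (k * p2) * (k * m1) \<noteq> 0"
  proof -
    have "k * p1 * - (k * m2) - - (k * p2) * (k * m1) = - (k * k * k)" unfolding k_def by (simp add: algebra_simps)
    then show ?thesis using nz(3) unfolding k_def by simp
  qed
  moreover have "k * p1 \<noteq> 0" "k * m1 \<noteq> 0" using nz unfolding k_def by simp_all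
  ultimately show ?case using s by blast
qed

lemma approx_chain:
  assumes "approx yp D sp" "approx ym D sm" "3 \<le> D"
  shows "approx (fst (chain2 yp ym l)) (3 ^ l * (D - 2) + 2) (fst (symc sp sm l)) \<and>
         approx (snd (chain2 yp ym l)) (3 ^ l * (D - 2) + 2) (snd (symc sp sm l))"
proof (induction l)
  case 0
  have "3 ^ 0 * (D - 2) + 2 = D" using assms(3) by simp
  then show ?case using assms by simp
next
  case (Suc l)
  obtain p m where c: "chain2 yp ym l = (p, m)" by (cases "chain2 yp ym l")
  obtain p' m' where s: "symc sp sm l = (p', m')" by (cases "symc sp sm l")
  define t where "t = 3 ^ l * (D - 2)"
  have ih: "approx p (t + 2) p'" "approx m (t + 2) m'" using Suc c s unfolding t_def by auto
  have c1: "approx (wcomm p m) (t + 2 + (t + 2) - 2) (PB p' m')" by (rule approx_comm[OF ih]) simp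
  have c2: "approx (wcomm p (wcomm p m)) (t + 2 + (t + 2 + (t + 2) - 2) - 2) (PB p' (PB p' m'))"
    by (rule approx_comm[OF ih(1) c1]) simp
  have c3: "approx (wcomm m (wcomm p m)) (t + 2 + (t + 2 + (t + 2) - 2) - 2) (PB m' (PB p' m'))"
    by (rule approx_comm[OF ih(2) c1]) simp
  have e: "t + 2 + (t + 2 + (t + 2) - 2) - 2 = 3 ^ Suc l * (D - 2) + 2" unfolding t_def by simp
  show ?case using c2 c3 unfolding e by (simp add: c s Let_def)
qed

lemma approx_wdeg:
  assumes "approx f N s" "s \<noteq> 0"
  shows "wdeg f = ereal (real N)"
proof -
  have A1: "\<And>x. N \<le> widx_abs x \<Longrightarrow> lk f x = lk s x" and A2: "\<And>x. lk s x \<noteq> 0 \<Longrightarrow> widx_abs x = N"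
    using assms(1) unfolding approx_def by blast+
  obtain x where x: "lk s x \<noteq> 0" using assms(2) by (metis poly_mapping_eqI lookup_zero)
  have hx: "widx_abs x = N" using A2 x by blast
  have fx: "lk f x \<noteq> 0" using A1[of x] x hx by simp
  then have f0: "f \<noteq> 0" by auto
  have le: "widx_abs y \<le> N" if y: "y \<in> ks f" for y
  proof (rule ccontr)
    assume "\<not> widx_abs y \<le> N"
    then have "lk f y = lk s y" "lk s y = 0" using A1[of y] A2[of y] by auto
    then show False using y by (simp add: in_keys_iff)
  qed
  have "Max (widx_abs ` ks f) = N"
    by (rule Max_eqI) (use le fx hx in \<open>auto simp: in_keys_iff\<close>)
  then show ?thesis unfolding wdeg_def using f0 by simp
qed

lemma lk_lift: "lk (lift \<phi> G) x = (\<Sum>m\<in>ks G. if \<phi> m = x then lk G m else 0)"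
  unfolding lift_def lookup_sum by (simp add: lookup_single when_def)

lemma swap_neq:
  assumes "a \<noteq> b" shows "(b + m, a + m) \<noteq> (a + m', b + (m'::midx))"
proof
  assume "(b + m, a + m) = (a + m', b + m')"
  then have "lk (b + m) j = lk (a + m') j" "lk (a + m) j = lk (b + m') j" for j by auto
  then have h: "lk b j + lk m j = lk a j + lk m' j" "lk a j + lk m j = lk b j + lk m' j" for j
    by (simp_all add: lookup_add)
  have "lk a j = lk b j" for j using h[of j] by linarith
  then have "a = b" by (rule poly_mapping_eqI)
  with assms show False ..
qed

lemma T_nonzero:
  assumes "a \<noteq> b" "p1 \<noteq> 0" "G \<noteq> 0"
  shows "wscale p1 (Tm (a, b) G) + wscale p2 (Tm (b, a) G) \<noteq> 0"
proof -
  obtain m0 where m0: "m0 \<in> ks G" using assms(3) by (metis keys_eq_empty ex_in_conv)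
  have 1: "lk (Tm (a, b) G) (a + m0, b + m0) = lk G m0"
    unfolding lk_lift using m0 by (simp add: sum.delta)
  have 2: "lk (Tm (b, a) G) (a + m0, b + m0) = 0"
  proof -
    have "\<And>m. \<not> (b + m = a + m0 \<and> a + m = b + m0)" using swap_neq[OF assms(1)] by simp
    then show ?thesis unfolding lk_lift by (intro sum.neutral) (simp, blast)
  qed
  have "lk (wscale p1 (Tm (a, b) G) + wscale p2 (Tm (b, a) G)) (a + m0, b + m0) = p1 * lk G m0"
    using 1 2 by (simp add: lookup_add)
  also have "\<dots> \<noteq> 0" using assms(2) m0 by (simp add: in_keys_iff)
  finally show ?thesis by auto
qed

lemma class_perp_swap: "class_perp n (b, a) = class_perp n (a, b)"
proof -
  have om: "class_om n (b, a) = class_om n (a, b)"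
  proof -
    have "(\<lambda>k. k < n \<and> lk b k + lk a k = 1 \<and> (\<forall>j<n. j \<noteq> k \<longrightarrow> lk b j = lk a j)) =
          (\<lambda>k. k < n \<and> lk a k + lk b k = 1 \<and> (\<forall>j<n. j \<noteq> k \<longrightarrow> lk a j = lk b j))"
      by (auto simp: fun_eq_iff add.commute)
    then show ?thesis unfolding class_om_def widx_abs_def by (simp add: add.commute)
  qed
  show ?thesis unfolding class_perp_def om
    unfolding class0_def class1_def class2_def class_eq_def widx_abs_def
    by (auto simp: add.commute)
qed

lemma gbasis_nz: "lk (gbasis s g) x \<noteq> 0 \<Longrightarrow> x = g \<or> x = (snd g, fst g)"
  unfolding gbasis_def wadj_wmon
  by (cases s) (auto simp: wmon_def lookup_add lookup_minus lookup_single when_def split: if_splits)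

lemma hat_perp:
  assumes "gbasis \<sigma> \<gamma> \<in> hatA_perp n" "lk (gbasis \<sigma> \<gamma>) \<gamma> \<noteq> 0"
  shows "class_perp n \<gamma>"
proof -
  from assms(1) obtain S c where S: "finite S" "S \<subseteq> {gbasis s g | s g. basis_idx n s g \<and> class_perp n g}"
    and f: "gbasis \<sigma> \<gamma> = (\<Sum>b\<in>S. wscale (complex_of_real (c b)) b)"
    unfolding hatA_perp_def rspan_def by blast
  have "lk (gbasis \<sigma> \<gamma>) \<gamma> = (\<Sum>b\<in>S. complex_of_real (c b) * lk b \<gamma>)"
    unfolding f lookup_sum by simp
  with assms(2) obtain x where x: "x \<in> S" "lk x \<gamma> \<noteq> 0"
    by (metis (no_types, lifting) mult_zero_right sum.neutral)
  then obtain s g where xg: "x = gbasis s g" "class_perp n g" using S by blast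
  then have "\<gamma> = g \<or> \<gamma> = (snd g, fst g)" using gbasis_nz x(2) by blast
  then show ?thesis
  proof
    assume "\<gamma> = (snd g, fst g)"
    then show ?thesis using class_perp_swap[of n "snd g" "fst g"] xg(2) by simp
  qed (use xg in simp)
qed

lemma perp_facts:
  assumes P: "class_perp n (a, b)" and M: "in_modes n (a, b)"
  shows "a \<noteq> b" "3 \<le> widx_abs (a, b)"
    "2 \<le> (\<Sum>j\<in>ks (a + b). if lk a j = lk b j then 0 else lk a j + lk b j)"
proof -
  have n0: "\<not> class0 (a, b)" and n1: "\<not> class1 (a, b)" and n2: "\<not> class2 (a, b)"
    and ne: "\<not> class_eq (a, b)" and no: "\<not> class_om n (a, b)"
    using P unfolding class_perp_def by auto
  show ab: "a \<noteq> b"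
  proof
    assume e: "a = b"
    then have w: "widx_abs (a, b) = 2 * midx_abs a" by (simp add: widx_abs_def)
    show False
    proof (cases "midx_abs a \<le> 1")
      case True
      then have "widx_abs (a, b) \<in> {0, 2}" using w by auto
      then have "class0 (a, b)" using e by (simp add: class0_def)
      then show False using n0 by simp
    next
      case False
      then have "widx_abs (a, b) \<ge> 4" using w by auto
      then have "class_eq (a, b)" using e by (simp add: class_eq_def)
      then show False using ne by simp
    qed
  qed
  have w0: "widx_abs (a, b) \<noteq> 0"
  proof
    assume "widx_abs (a, b) = 0"
    then have "midx_abs a = 0" "midx_abs b = 0" by (auto simp: widx_abs_def)
    then have "a = 0" "b = 0" by (auto simp: midx_abs_eq0)
    then show False using ab by simp
  qed
  have w1: "widx_abs (a, b) \<noteq> 1" using n1 by (simp add: class1_def)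
  have w2: "widx_abs (a, b) \<noteq> 2" using n2 ab by (simp add: class2_def)
  show d3: "3 \<le> widx_abs (a, b)" using w0 w1 w2 by linarith
  define f where "f j = (if lk a j = lk b j then 0 else lk a j + lk b j)" for j
  define T where "T = ks (a + b)"
  show "2 \<le> (\<Sum>j\<in>ks (a + b). if lk a j = lk b j then 0 else lk a j + lk b j)"
  proof (rule ccontr)
    assume A: "\<not> 2 \<le> (\<Sum>j\<in>ks (a + b). if lk a j = lk b j then 0 else lk a j + lk b j)"
    then have A': "sum f T \<le> 1" unfolding f_def T_def by simp
    obtain k where k: "lk a k \<noteq> lk b k" using ab by (metis poly_mapping_eqI)
    have kT: "k \<in> T" unfolding T_def using k by (auto simp: in_keys_iff lookup_add)
    have split: "sum f T = f k + sum f (T - {k})" unfolding T_def by (rule sum.remove) (use kT T_def in auto)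
    have fk: "f k = lk a k + lk b k" using k by (simp add: f_def)
    have fk1: "1 \<le> f k" using k fk by linarith
    have k1: "lk a k + lk b k = 1" and rest: "sum f (T - {k}) = 0" using split A' fk fk1 by linarith+
    have rest': "\<forall>j\<in>T - {k}. f j = 0" using rest unfolding T_def by simp
    have oth: "lk a j = lk b j" if "j \<noteq> k" for j
    proof (cases "j \<in> T")
      case True
      then have "f j = 0" using rest' that by blast
      then show ?thesis unfolding f_def by (auto split: if_splits)
    next
      case False
      then show ?thesis unfolding T_def by (simp add: in_keys_iff lookup_add)
    qed
    have kn: "k < n"
    proof -
      have "k \<in> ks a \<or> k \<in> ks b" using k1 by (auto simp: in_keys_iff)
      then show ?thesis using M unfolding in_modes_def by auto
    qed
    have ex: "\<exists>!k'. k' < n \<and> lk a k' + lk b k' = 1 \<and> (\<forall>j<n. j \<noteq> k' \<longrightarrow> lk a j = lk b j)"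
    proof (rule ex1I[of _ k])
      show "k < n \<and> lk a k + lk b k = 1 \<and> (\<forall>j<n. j \<noteq> k \<longrightarrow> lk a j = lk b j)" using kn k1 oth by simp
      fix k' assume "k' < n \<and> lk a k' + lk b k' = 1 \<and> (\<forall>j<n. j \<noteq> k' \<longrightarrow> lk a j = lk b j)"
      then have "\<forall>j<n. j \<noteq> k' \<longrightarrow> lk a j = lk b j" by simp
      then show "k' = k" using kn k by blast
    qed
    have "class_om n (a, b)" unfolding class_om_def using d3 ex by simp
    then show False using no by simp
  qed
qed

lemma deg_EE_R: "degree (EE a b (sg (a + b) 1)) = (\<Sum>j\<in>ks (a + b). if lk a j = lk b j then 0 else lk a j + lk b j)"
proof -
  have e: "EE a b (sg (a + b) 1) = Emon a b (a + b)" by (simp add: EE_single)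
  have Lnz: "Lp a b j \<noteq> 0" for j by (simp add: Lp_def)
  have dL: "degree (Lp a b j) = (if lk a j = lk b j then 0 else 1)" for j
    by (simp add: Lp_def dlt_def)
  have "degree (Emon a b (a + b)) = (\<Sum>j\<in>ks (a + b). degree (Lp a b j ^ lk (a + b) j))"
    unfolding Emon_def by (rule degree_prod_eq_sum_degree) (simp add: Lnz)
  also have "\<dots> = (\<Sum>j\<in>ks (a + b). if lk a j = lk b j then 0 else lk a j + lk b j)"
    by (intro sum.cong refl) (simp add: degree_power_eq[OF Lnz] dL lookup_add)
  finally show ?thesis unfolding e .
qed

theorem theorem7:
  fixes n :: nat and \<gamma> :: widx and \<sigma> :: sgn and l :: nat
  assumes "n \<ge> 1"
    and "in_modes n \<gamma>"
    and "\<not> lex_less (fst \<gamma>) (snd \<gamma>)"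
    and "\<sigma> = SMinus \<longrightarrow> lex_less (snd \<gamma>) (fst \<gamma>)"
    and "gbasis \<sigma> \<gamma> \<in> hatA_perp n"
  shows "wdeg (chain_sel \<sigma> (chain2 (gbasis SPlus \<gamma>) (gbasis SMinus \<gamma>) l))
           = ereal (3 ^ l * (real (widx_abs \<gamma>) - 2) + 2)
       \<and> ereal (3 ^ l * (real (widx_abs \<gamma>) - 2) + 2) \<ge> ereal (3 ^ l + 2)"
proof -
  obtain a b where g: "\<gamma> = (a, b)" by (cases \<gamma>)
  have self: "lk (gbasis \<sigma> \<gamma>) \<gamma> \<noteq> 0"
  proof (cases \<sigma>)
    case SPlus
    then show ?thesis unfolding gbasis_def wadj_wmon by (simp add: wmon_def lookup_add lookup_single when_def)
  next
    case SMinus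
    then have "lex_less b a" using assms(4) g by simp
    then have "a \<noteq> b" unfolding lex_less_def by auto
    then show ?thesis using SMinus g unfolding gbasis_def wadj_wmon by (simp add: wmon_def lookup_minus lookup_single when_def)
  qed
  have P: "class_perp n (a, b)" using hat_perp[OF assms(5) self] g by simp
  have M: "in_modes n (a, b)" using assms(2) g by simp
  note pf = perp_facts[OF P M]
  define d where "d = widx_abs (a, b)"
  have d3: "3 \<le> d" using pf(2) d_def by simp
  have deg: "2 \<le> degree (EE a b (sg (a + b) 1))" using pf(3) deg_EE_R by simp
  have hom: "approx (gbasis s (a, b)) d (gbasis s (a, b))" for s
    unfolding approx_def
  proof (intro conjI allI impI refl)
    fix x assume "lk (gbasis s (a, b)) x \<noteq> 0"
    then have "x = (a, b) \<or> x = (b, a)" using gbasis_nz by fastforce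
    then show "widx_abs x = d" unfolding d_def widx_abs_def by auto
  qed
  note ch = approx_chain[OF hom[of SPlus] hom[of SMinus] d3, of l]
  obtain G p1 p2 m1 m2 where st: "symc (gbasis SPlus (a, b)) (gbasis SMinus (a, b)) l =
      (wscale p1 (Tm (a, b) G) + wscale p2 (Tm (b, a) G), wscale m1 (Tm (a, b) G) + wscale m2 (Tm (b, a) G))"
    and nz: "p1 \<noteq> 0" "m1 \<noteq> 0" "EE a b G \<noteq> 0"
    using symc_form[OF deg, of l] by blast
  have G0: "G \<noteq> 0" using nz(3) by auto
  define N where "N = 3 ^ l * (d - 2) + 2"
  have wd: "wdeg (chain_sel \<sigma> (chain2 (gbasis SPlus (a, b)) (gbasis SMinus (a, b)) l)) = ereal (real N)"
  proof (cases \<sigma>)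
    case SPlus
    show ?thesis unfolding SPlus chain_sel_def sgn.case N_def
      by (rule approx_wdeg[OF conjunct1[OF ch]]) (use T_nonzero[OF pf(1) nz(1) G0] in \<open>simp add: st\<close>)
  next
    case SMinus
    show ?thesis unfolding SMinus chain_sel_def sgn.case N_def
      by (rule approx_wdeg[OF conjunct2[OF ch]]) (use T_nonzero[OF pf(1) nz(2) G0] in \<open>simp add: st\<close>)
  qed
  have rN: "real N = 3 ^ l * (real (widx_abs \<gamma>) - 2) + 2"
    unfolding N_def d_def g using d3 d_def by (simp add: of_nat_diff)
  have "(3::real) ^ l + 2 \<le> 3 ^ l * (real (widx_abs \<gamma>) - 2) + 2"
  proof -
    have "1 \<le> real (widx_abs \<gamma>) - 2" using d3 d_def g by simp
    then have "(3::real) ^ l * 1 \<le> 3 ^ l * (real (widx_abs \<gamma>) - 2)" by (intro mult_left_mono) auto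
    then show ?thesis by simp
  qed
  then show ?thesis using wd rN g by simp
qed

end
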